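(* Let $\mathcal{P}$ be a profile of unrooted phylogenetic trees whose display graph $G(\mathcal{P})$ is connected. Let $F$ be a nice minimal cut of $G(\mathcal{P})$ and let $G_1,G_2$ be the two connected components of $G(\mathcal{P})-F$. Then $\mathcal{L}(G_1)|\mathcal{L}(G_2)$ is a split of $\mathcal{L}(\mathcal{P})$, where $\mathcal{L}(G_i)$ denotes the set of leaves (elements of $\mathcal{L}(\mathcal{P})$) in $G_i$.
   Context: A phylogenetic tree $T$ is an unrooted tree whose leaves are bijectively labeled by $\mathcal{L}(T)$ (leaves identified with labels; internal vertices have degree at least three). A profile $\mathcal{P}=\{T_1,\dots,T_k\}$ is a finite collection of phylogenetic trees, $\mathcal{L}(\mathcal{P})=\bigcup_i\mathcal{L}(T_i)$; internal vertices of distinct trees are disjoint, while leaves with the same label are the same vertex. The display graph $G(\mathcal{P})$ has vertex set $\bigcup_i V(T_i)$ and edge set $\bigcup_i E(T_i)$. For a vertex $u$ of an input tree, $\mathrm{Inc}(u)$ is the set of edges of $G(\mathcal{P})$ incident with $u$. A split of a set $L$ is a bipartition of $L$ into two nonempty sets. A cut of a connected graph $G$ is $F\subseteq E(G)$ with $G-F$ disconnected; minimal if no proper subset is a cut (then $G-F$ has exactly two components). A cut $F$ of $G(\mathcal{P})$ is legal if for every $T\in\mathcal{P}$ there is $u\in V(T)$ with $F\cap E(T)\subseteq\mathrm{Inc}(u)$; nice if legal and every component of $G(\mathcal{P})-F$ contains at least one edge. *)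

theory Defs
  imports Main
begin

text \<open>Undirected graphs are pairs (V, E) with E a set of 2-element subsets of V.
A (phylogenetic) tree is such a pair; its leaves (= labels) are its vertices of degree at most 1.\<close>

type_synonym 'v graph = "'v set \<times> 'v set set"

definition verts :: "'v graph \<Rightarrow> 'v set" where "verts G = fst G"
definition edges :: "'v graph \<Rightarrow> 'v set set" where "edges G = snd G"

definition adj :: "'v set set \<Rightarrow> ('v \<times> 'v) set" where
  "adj E = {(u, v). {u, v} \<in> E \<and> u \<noteq> v}"

definition wf_graph :: "'v set \<Rightarrow> 'v set set \<Rightarrow> bool" where
  "wf_graph V E \<longleftrightarrow> (\<forall>e\<in>E. \<exists>u v. u \<noteq> v \<and> e = {u, v} \<and> u \<in> V \<and> v \<in> V)"

definition connected_graph :: "'v set \<Rightarrow> 'v set set \<Rightarrow> bool" where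
  "connected_graph V E \<longleftrightarrow> V \<noteq> {} \<and> (\<forall>u\<in>V. \<forall>v\<in>V. (u, v) \<in> (adj E)\<^sup>*)"

text \<open>A tree: finite, connected, and acyclic (every edge is a bridge).\<close>
definition is_tree :: "'v set \<Rightarrow> 'v set set \<Rightarrow> bool" where
  "is_tree V E \<longleftrightarrow> finite V \<and> wf_graph V E \<and> connected_graph V E \<and>
     (\<forall>e\<in>E. \<not> connected_graph V (E - {e}))"

definition degree :: "'v set set \<Rightarrow> 'v \<Rightarrow> nat" where
  "degree E v = card {e \<in> E. v \<in> e}"

definition leaves :: "'v graph \<Rightarrow> 'v set" where
  "leaves T = {v \<in> verts T. degree (edges T) v \<le> 1}"

text \<open>Unrooted phylogenetic tree: leaves identified with their labels; internal
vertices have degree at least three.\<close>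
definition phylo_tree :: "'v graph \<Rightarrow> bool" where
  "phylo_tree T \<longleftrightarrow> is_tree (verts T) (edges T) \<and>
     (\<forall>v\<in>verts T - leaves T. degree (edges T) v \<ge> 3)"

definition profile :: "'v graph set \<Rightarrow> bool" where
  "profile P \<longleftrightarrow> finite P \<and> (\<forall>T\<in>P. phylo_tree T) \<and>
     (\<forall>T\<in>P. \<forall>T'\<in>P. T \<noteq> T' \<longrightarrow> verts T \<inter> verts T' \<subseteq> leaves T \<inter> leaves T')"

definition labels :: "'v graph set \<Rightarrow> 'v set" where
  "labels P = (\<Union>T\<in>P. leaves T)"

definition display_graph :: "'v graph set \<Rightarrow> 'v graph" where
  "display_graph P = ((\<Union>T\<in>P. verts T), (\<Union>T\<in>P. edges T))"

definition Inc :: "'v graph set \<Rightarrow> 'v \<Rightarrow> 'v set set" where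
  "Inc P u = {e \<in> edges (display_graph P). u \<in> e}"

definition is_cut :: "'v graph \<Rightarrow> 'v set set \<Rightarrow> bool" where
  "is_cut G F \<longleftrightarrow> F \<subseteq> edges G \<and> \<not> connected_graph (verts G) (edges G - F)"

definition minimal_cut :: "'v graph \<Rightarrow> 'v set set \<Rightarrow> bool" where
  "minimal_cut G F \<longleftrightarrow> is_cut G F \<and> (\<forall>F'. F' \<subset> F \<longrightarrow> \<not> is_cut G F')"

definition component :: "'v set \<Rightarrow> 'v set set \<Rightarrow> 'v set \<Rightarrow> bool" where
  "component V E C \<longleftrightarrow> (\<exists>v\<in>V. C = {u \<in> V. (v, u) \<in> (adj E)\<^sup>*})"

definition legal_cut :: "'v graph set \<Rightarrow> 'v set set \<Rightarrow> bool" where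
  "legal_cut P F \<longleftrightarrow> is_cut (display_graph P) F \<and>
     (\<forall>T\<in>P. \<exists>u\<in>verts T. F \<inter> edges T \<subseteq> Inc P u)"

definition nice_cut :: "'v graph set \<Rightarrow> 'v set set \<Rightarrow> bool" where
  "nice_cut P F \<longleftrightarrow> legal_cut P F \<and>
     (\<forall>C. component (verts (display_graph P)) (edges (display_graph P) - F) C \<longrightarrow>
        (\<exists>e \<in> edges (display_graph P) - F. e \<subseteq> C))"

definition is_split :: "'v set \<Rightarrow> 'v set \<Rightarrow> 'v set \<Rightarrow> bool" where
  "is_split L A B \<longleftrightarrow> A \<noteq> {} \<and> B \<noteq> {} \<and> A \<inter> B = {} \<and> A \<union> B = L"

end

theory Submission
  imports Defs
begin

fun chain :: "'v set set \<Rightarrow> 'v list \<Rightarrow> bool" where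
  "chain E (x#y#xs) = ({x,y} \<in> E \<and> chain E (y#xs))"
| "chain E _ = True"

lemma chain_snoc: "chain E (xs @ [y]) \<longleftrightarrow> chain E xs \<and> (xs \<noteq> [] \<longrightarrow> {last xs, y} \<in> E)"
  by (induction E xs rule: chain.induct) auto

lemma chain_rev: "chain E (rev xs) = chain E xs"
proof (induction xs)
  case Nil then show ?case by simp
next
  case (Cons x xs)
  have "chain E (rev (x#xs)) = (chain E xs \<and> (xs \<noteq> [] \<longrightarrow> {hd xs, x} \<in> E))"
    by (simp only: rev.simps chain_snoc Cons.IH) (simp add: last_rev)
  then show ?case by (cases xs) (auto simp: insert_commute)
qed

lemma chain_remove: "chain E xs \<Longrightarrow> a \<notin> set xs \<Longrightarrow> chain (E - {f. a \<in> f}) xs"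
  by (induction E xs rule: chain.induct) auto

lemma adj_sym: "(x,y) \<in> (adj E)\<^sup>* \<Longrightarrow> (y,x) \<in> (adj E)\<^sup>*"
proof -
  assume a: "(x,y) \<in> (adj E)\<^sup>*"
  have "sym (adj E)" by (auto simp: sym_def adj_def insert_commute)
  then have "sym ((adj E)\<^sup>*)" by (rule sym_rtrancl)
  then show ?thesis using a by (meson symD)
qed

lemma reach_mono: "E \<subseteq> E' \<Longrightarrow> (x,y) \<in> (adj E)\<^sup>* \<Longrightarrow> (x,y) \<in> (adj E')\<^sup>*"
proof -
  assume "E \<subseteq> E'" "(x,y) \<in> (adj E)\<^sup>*"
  moreover have "adj E \<subseteq> adj E'" using \<open>E \<subseteq> E'\<close> by (auto simp: adj_def)
  ultimately show ?thesis using rtrancl_mono by blast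
qed

lemma chain_reach: "chain E xs \<Longrightarrow> distinct xs \<Longrightarrow> y \<in> set xs \<Longrightarrow> (hd xs, y) \<in> (adj E)\<^sup>*"
proof (induction E xs rule: chain.induct)
  case (1 E x z xs)
  show ?case
  proof (cases "y = x")
    case True then show ?thesis by simp
  next
    case False
    then have "(z, y) \<in> (adj E)\<^sup>*" using 1 by auto
    moreover have "(x, z) \<in> adj E" using 1 by (auto simp: adj_def)
    ultimately show ?thesis by (simp add: converse_rtrancl_into_rtrancl)
  qed
qed auto

lemma reroute:
  assumes "(x,y) \<in> (adj E)\<^sup>*" and ab: "(a,b) \<in> (adj (E - {{a,b}}))\<^sup>*"
  shows "(x,y) \<in> (adj (E - {{a,b}}))\<^sup>*"
  using assms(1)
proof induct
  case base then show ?case by simp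
next
  case (step y z)
  then have yz: "{y,z} \<in> E" "y \<noteq> z" by (auto simp: adj_def)
  show ?case
  proof (cases "{y,z} = {a,b}")
    case True
    then have "(y = a \<and> z = b) \<or> (y = b \<and> z = a)" by (auto simp: doubleton_eq_iff)
    then show ?thesis using step(3) ab adj_sym[OF ab] by (auto intro: rtrancl_trans)
  next
    case False
    then have "(y,z) \<in> adj (E - {{a,b}})" using yz by (auto simp: adj_def)
    then show ?thesis using step(3) by (simp add: rtrancl_into_rtrancl)
  qed
qed

lemma add_edge:
  assumes "(x,y) \<in> (adj (insert {a,b} E))\<^sup>*"
  shows "(x,y) \<in> (adj E)\<^sup>* \<or> (((x,a) \<in> (adj E)\<^sup>* \<or> (x,b) \<in> (adj E)\<^sup>*) \<and> ((a,y) \<in> (adj E)\<^sup>* \<or> (b,y) \<in> (adj E)\<^sup>*))"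
  using assms
proof induct
  case base then show ?case by simp
next
  case (step y z)
  then have yz: "{y,z} \<in> insert {a,b} E" "y \<noteq> z" by (auto simp: adj_def)
  show ?case
  proof (cases "{y,z} = {a,b}")
    case True
    then have "(y = a \<and> z = b) \<or> (y = b \<and> z = a)" by (auto simp: doubleton_eq_iff)
    then show ?thesis using step(3) by auto
  next
    case False
    then have "(y,z) \<in> adj E" using yz by (auto simp: adj_def)
    then show ?thesis using step(3) by (meson rtrancl_into_rtrancl)
  qed
qed

lemma comp_char:
  assumes "component V E C" "x \<in> C"
  shows "C = {w\<in>V. (x,w) \<in> (adj E)\<^sup>*}"
proof -
  obtain v where v: "v \<in> V" "C = {u \<in> V. (v, u) \<in> (adj E)\<^sup>*}"
    using assms(1) by (auto simp: component_def)
  then have vx: "(v,x) \<in> (adj E)\<^sup>*" "(x,v) \<in> (adj E)\<^sup>*" using assms(2) adj_sym by auto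
  show ?thesis using v vx by (auto intro: rtrancl_trans)
qed

lemma comp_eq: "component V E C1 \<Longrightarrow> component V E C2 \<Longrightarrow> x \<in> C1 \<Longrightarrow> x \<in> C2 \<Longrightarrow> C1 = C2"
  using comp_char by metis

lemma comp_sub: "component V E C \<Longrightarrow> C \<subseteq> V"
  by (auto simp: component_def)

lemma comp_ne: "component V E C \<Longrightarrow> C \<noteq> {}"
  by (auto simp: component_def)

lemma comp_of: "v \<in> V \<Longrightarrow> component V E {w\<in>V. (v,w) \<in> (adj E)\<^sup>*}"
  by (auto simp: component_def)

lemma two_comps:
  assumes conn: "connected_graph V E" and mc: "minimal_cut (V,E) F"
    and wf: "\<forall>e\<in>E. \<exists>a b. e = {a,b}"
    and c1: "component V (E-F) C1" and c2: "component V (E-F) C2" and c3: "component V (E-F) C3"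
    and ne: "C1 \<noteq> C2"
  shows "C3 = C1 \<or> C3 = C2"
proof (rule ccontr)
  assume n3: "\<not> (C3 = C1 \<or> C3 = C2)"
  have cut: "F \<subseteq> E" "\<not> connected_graph V (E - F)"
    using mc by (auto simp: minimal_cut_def is_cut_def edges_def verts_def)
  have "F \<noteq> {}" using cut conn by auto
  then obtain e where e: "e \<in> F" by auto
  then obtain a b where ab: "e = {a,b}" using wf cut by blast
  have "\<not> is_cut (V,E) (F - {e})" using mc e by (auto simp: minimal_cut_def)
  then have "connected_graph V (E - (F - {e}))" using cut by (auto simp: is_cut_def edges_def verts_def)
  moreover have "E - (F - {e}) = insert {a,b} (E - F)" using e ab cut by auto
  ultimately have con: "\<forall>x\<in>V. \<forall>y\<in>V. (x,y) \<in> (adj (insert {a,b} (E-F)))\<^sup>*"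
    by (simp add: connected_graph_def)
  let ?R = "(adj (E-F))\<^sup>*"
  have sep: "(x,y) \<notin> ?R" if "component V (E-F) A" "component V (E-F) B" "A \<noteq> B" "x \<in> A" "y \<in> B" for A B x y
  proof
    assume "(x,y) \<in> ?R"
    then have "y \<in> A" using comp_char[OF that(1) that(4)] that comp_sub by blast
    then show False using comp_eq that by metis
  qed
  have ends: "(x,a) \<in> ?R \<or> (x,b) \<in> ?R" if "component V (E-F) A" "component V (E-F) B" "A \<noteq> B" "x \<in> A" "y \<in> B" for A B x y
  proof -
    have "x \<in> V" "y \<in> V" using that comp_sub by blast+
    then have "(x,y) \<in> (adj (insert {a,b} (E-F)))\<^sup>*" using con by blast
    from add_edge[OF this] sep[OF that] show ?thesis by blast
  qed
  obtain x1 where x1: "x1 \<in> C1" using comp_ne[OF c1] by auto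
  obtain x2 where x2: "x2 \<in> C2" using comp_ne[OF c2] by auto
  obtain x3 where x3: "x3 \<in> C3" using comp_ne[OF c3] by auto
  have e1: "(x1,a) \<in> ?R \<or> (x1,b) \<in> ?R" using ends[OF c1 c2 ne x1 x2] .
  have e2: "(x2,a) \<in> ?R \<or> (x2,b) \<in> ?R" using ends[OF c2 c1 _ x2 x1] ne by metis
  have e3: "(x3,a) \<in> ?R \<or> (x3,b) \<in> ?R" using ends[OF c3 c1 _ x3 x1] n3 by metis
  have same: "(x,y) \<in> ?R" if "(x,c) \<in> ?R" "(y,c) \<in> ?R" for x y c
    using that adj_sym rtrancl_trans by metis
  have s12: "(x1,x2) \<notin> ?R" using sep[OF c1 c2 ne x1 x2] .
  have s13: "(x1,x3) \<notin> ?R" using sep[OF c1 c3 _ x1 x3] n3 by metis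
  have s23: "(x2,x3) \<notin> ?R" using sep[OF c2 c3 _ x2 x3] n3 by metis
  show False
  proof (cases "(x1,a) \<in> ?R")
    case True
    then have "(x2,a) \<notin> ?R" "(x3,a) \<notin> ?R" using s12 s13 same by blast+
    then have "(x2,b) \<in> ?R" "(x3,b) \<in> ?R" using e2 e3 by blast+
    then show False using s23 same by blast
  next
    case False
    then have "(x1,b) \<in> ?R" using e1 by blast
    then have "(x2,b) \<notin> ?R" "(x3,b) \<notin> ?R" using s12 s13 same by blast+
    then have "(x2,a) \<in> ?R" "(x3,a) \<in> ?R" using e2 e3 by blast+
    then show False using s23 same by blast
  qed
qed

lemma two_elems: "2 \<le> card S \<Longrightarrow> \<exists>x y. x \<in> S \<and> y \<in> S \<and> x \<noteq> y"
proof -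
  assume c: "2 \<le> card S"
  then have "S \<noteq> {}" by auto
  then obtain x where x: "x \<in> S" by auto
  show ?thesis
  proof (cases "S \<subseteq> {x}")
    case True
    then have "card S \<le> card {x}" by (intro card_mono) auto
    then have "card S \<le> 1" by simp
    then show ?thesis using c by simp
  next
    case False then show ?thesis using x by blast
  qed
qed


lemma wf_edgeE:
  assumes "wf_graph V E" "e \<in> E"
  obtains u v where "u \<noteq> v" "e = {u,v}" "u \<in> V" "v \<in> V"
  using assms unfolding wf_graph_def by meson

lemma leaf_in_comp:
  fixes T :: "'v graph"
  assumes pt: "phylo_tree T"
    and closed: "\<And>f x y. f \<in> edges T - F \<Longrightarrow> f = {x,y} \<Longrightarrow> x \<in> C \<Longrightarrow> y \<in> C"
    and legal: "\<And>f. f \<in> F \<inter> edges T \<Longrightarrow> u \<in> f"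
    and f0: "f0 \<in> edges T - F" "f0 \<subseteq> C"
  shows "C \<inter> leaves T \<noteq> {}"
proof
  assume noleaf: "C \<inter> leaves T = {}"
  define Vt where "Vt = verts T"
  define Et where "Et = edges T"
  have tree: "is_tree Vt Et" and deg3: "\<forall>v\<in>Vt - leaves T. degree Et v \<ge> 3"
    using pt by (auto simp: phylo_tree_def Vt_def Et_def)
  have fin: "finite Vt" and wf: "wf_graph Vt Et" and conn: "connected_graph Vt Et"
    and bridge: "\<forall>e\<in>Et. \<not> connected_graph Vt (Et - {e})"
    using tree by (auto simp: is_tree_def)
  have deg: "degree Et w \<ge> 3" if "w \<in> C" "w \<in> Vt" for w
    using deg3 noleaf that by blast
  define EH where "EH = {f \<in> Et - F. f \<subseteq> C}"
  have EH_Et: "EH \<subseteq> Et" by (auto simp: EH_def)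
  have nbrs: "\<exists>x1 x2. x1 \<noteq> x2 \<and> {w,x1} \<in> EH \<and> {w,x2} \<in> EH \<and> w \<noteq> x1 \<and> w \<noteq> x2
      \<and> x1 \<in> Vt \<and> x2 \<in> Vt \<and> x1 \<in> C \<and> x2 \<in> C"
    if w: "w \<in> C" "w \<in> Vt" "w \<noteq> u" for w
  proof -
    define A where "A = {f \<in> Et. w \<in> f}"
    have cA: "card A \<ge> 3" using deg[OF w(1,2)] by (simp add: degree_def A_def)
    then have finA: "finite A" using card.infinite by fastforce
    have "A \<subseteq> insert {w,u} (A - F)"
    proof
      fix f assume fA: "f \<in> A"
      show "f \<in> insert {w,u} (A - F)"
      proof (cases "f \<in> F")
        case True
        then have "u \<in> f" using legal fA by (auto simp: A_def Et_def)
        moreover have "f \<in> Et" using fA by (simp add: A_def)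
        then obtain p q where "p \<noteq> q" "f = {p,q}" by (rule wf_edgeE[OF wf])
        ultimately have "f = {w,u}" using fA w(3) by (auto simp: A_def)
        then show ?thesis by simp
      qed (use fA in auto)
    qed
    then have "card A \<le> card (insert {w,u} (A - F))" using finA by (intro card_mono) auto
    also have "\<dots> \<le> Suc (card (A - F))" by (rule card_insert_le_m1) (simp_all add: card_insert_le)
    finally have "2 \<le> card (A - F)" using cA by simp
    then obtain f1 f2 where f12: "f1 \<in> A - F" "f2 \<in> A - F" "f1 \<noteq> f2" using two_elems by blast
    have getx: "\<exists>x. f = {w,x} \<and> w \<noteq> x \<and> x \<in> Vt \<and> x \<in> C \<and> f \<in> EH" if "f \<in> A - F" for f
    proof -
      have "f \<in> Et" using that by (simp add: A_def)
      then obtain p q where pq: "p \<noteq> q" "f = {p,q}" "p \<in> Vt" "q \<in> Vt"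
        by (rule wf_edgeE[OF wf])
      have "w \<in> f" using that by (simp add: A_def)
      then have "w = p \<or> w = q" using pq by auto
      then obtain x where x: "f = {w,x}" "w \<noteq> x" "x \<in> Vt"
      proof
        assume "w = p" then show ?thesis using that[of q] pq by auto
      next
        assume "w = q" then show ?thesis using that[of p] pq by (auto simp: insert_commute)
      qed
      have fE: "f \<in> edges T - F" using that by (auto simp: A_def Et_def)
      have "x \<in> C" using closed[OF fE x(1) w(1)] .
      then have "f \<in> EH" using x w fE by (auto simp: EH_def Et_def)
      then show ?thesis using x \<open>x \<in> C\<close> by blast
    qed
    obtain x1 where x1: "f1 = {w,x1}" "w \<noteq> x1" "x1 \<in> Vt" "x1 \<in> C" "f1 \<in> EH" using getx[OF f12(1)] by blast
    obtain x2 where x2: "f2 = {w,x2}" "w \<noteq> x2" "x2 \<in> Vt" "x2 \<in> C" "f2 \<in> EH" using getx[OF f12(2)] by blast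
    have "x1 \<noteq> x2" using x1 x2 f12 by auto
    then show ?thesis using x1 x2 by blast
  qed
  define S where "S = {p. distinct p \<and> set p \<subseteq> C \<inter> Vt \<and> chain EH p \<and> 2 \<le> length p}"
  have f0Et: "f0 \<in> Et" using f0 by (simp add: Et_def)
  obtain a b where ab: "a \<noteq> b" "f0 = {a,b}" "a \<in> Vt" "b \<in> Vt"
    by (rule wf_edgeE[OF wf f0Et])
  have "[a,b] \<in> S" using ab f0 by (auto simp: S_def EH_def Et_def)
  have bnd: "\<forall>p. p \<in> S \<longrightarrow> length p \<le> card Vt"
  proof (intro allI impI)
    fix p assume "p \<in> S"
    then have "length p = card (set p)" "set p \<subseteq> Vt" by (auto simp: S_def distinct_card)
    then show "length p \<le> card Vt" using card_mono[OF fin] by simp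
  qed
  obtain p where pS: "p \<in> S" and pmax: "\<forall>q. q \<in> S \<longrightarrow> length q \<le> length p"
  proof -
    have "\<forall>y. y \<in> S \<longrightarrow> length y < Suc (card Vt)" using bnd by (simp add: less_Suc_eq_le)
    from ex_has_greatest_nat[of "\<lambda>p. p \<in> S" "[a,b]" length, OF \<open>[a,b] \<in> S\<close> this]
    show ?thesis using that by blast
  qed
  obtain q where qS: "q \<in> S" and ql: "length q = length p" and qu: "hd q \<noteq> u"
  proof (cases "hd p = u")
    case False then show ?thesis using that pS by blast
  next
    case True
    have "rev p \<in> S" using pS by (auto simp: S_def chain_rev)
    moreover have "hd (rev p) \<noteq> u"
    proof -
      obtain v0 v1 rest where p: "p = v0 # v1 # rest" using pS unfolding S_def by (cases p rule: remdups_adj.cases) auto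
      have "last p \<in> set (v1 # rest)" using p by simp
      then have lp: "last p \<noteq> v0" using pS p by (auto simp: S_def)
      have "hd p = v0" using p by simp
      then show ?thesis unfolding hd_rev using lp True by simp
    qed
    ultimately show ?thesis using that by simp
  qed
  obtain w0 w1 rest where q: "q = w0 # w1 # rest" using qS unfolding S_def by (cases q rule: remdups_adj.cases) auto
  have w0: "w0 \<in> C" "w0 \<in> Vt" "w0 \<noteq> u" using qS q qu by (auto simp: S_def)
  obtain x where x: "{w0,x} \<in> EH" "x \<noteq> w1" "x \<noteq> w0" "x \<in> Vt" "x \<in> C"
  proof -
    obtain x1 x2 where xx: "x1 \<noteq> x2" "{w0,x1} \<in> EH" "{w0,x2} \<in> EH" "w0 \<noteq> x1" "w0 \<noteq> x2"
      "x1 \<in> Vt" "x2 \<in> Vt" "x1 \<in> C" "x2 \<in> C" using nbrs[OF w0] by blast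
    show ?thesis
    proof (cases "x1 = w1")
      case True then show ?thesis using that[of x2] xx by auto
    next
      case False then show ?thesis using that[of x1] xx by auto
    qed
  qed
  show False
  proof (cases "x \<in> set q")
    case False
    then have "x # q \<in> S" using qS x q by (auto simp: S_def insert_commute)
    then have "length (x # q) \<le> length p" using pmax by blast
    then show False using ql by simp
  next
    case True
    then have xr: "x \<in> set (w1 # rest)" using q x by auto
    have ch: "chain EH (w1 # rest)" "{w0,w1} \<in> EH" and dq: "distinct (w0 # w1 # rest)"
      using qS q by (auto simp: S_def)
    have "chain (EH - {f. w0 \<in> f}) (w1 # rest)" using chain_remove[OF ch(1)] dq by simp
    then have "(w1, x) \<in> (adj (EH - {f. w0 \<in> f}))\<^sup>*" using chain_reach[OF _ _ xr] dq by fastforce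
    then have r1: "(w1, x) \<in> (adj (Et - {{w0,x}}))\<^sup>*" by (rule reach_mono[rotated]) (use EH_Et in auto)
    have "{w0,w1} \<noteq> {w0,x}" using x dq by (auto simp: doubleton_eq_iff)
    then have "(w0, w1) \<in> adj (Et - {{w0,x}})" using ch EH_Et dq by (auto simp: adj_def)
    with r1 have r: "(w0, x) \<in> (adj (Et - {{w0,x}}))\<^sup>*" by (simp add: converse_rtrancl_into_rtrancl)
    have "connected_graph Vt (Et - {{w0,x}})"
      unfolding connected_graph_def
    proof (intro conjI ballI)
      show "Vt \<noteq> {}" using w0 by auto
      fix y z assume "y \<in> Vt" "z \<in> Vt"
      then have "(y,z) \<in> (adj Et)\<^sup>*" using conn by (auto simp: connected_graph_def)
      then show "(y,z) \<in> (adj (Et - {{w0,x}}))\<^sup>*" using reroute[OF _ r] by blast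
    qed
    moreover have "{w0,x} \<in> Et" using x EH_Et by auto
    ultimately show False using bridge by blast
  qed
qed

theorem lemma10:
  fixes P :: "'v graph set" and F :: "'v set set" and C1 C2 :: "'v set"
  assumes "profile P"
    and "connected_graph (verts (display_graph P)) (edges (display_graph P))"
    and "nice_cut P F"
    and "minimal_cut (display_graph P) F"
    and "component (verts (display_graph P)) (edges (display_graph P) - F) C1"
    and "component (verts (display_graph P)) (edges (display_graph P) - F) C2"
    and "C1 \<noteq> C2"
  shows "is_split (labels P) (C1 \<inter> labels P) (C2 \<inter> labels P)"
proof -
  let ?V = "verts (display_graph P)"
  let ?E = "edges (display_graph P)"
  have Vd: "?V = (\<Union>T\<in>P. verts T)" "?E = (\<Union>T\<in>P. edges T)"
    by (simp_all add: display_graph_def verts_def edges_def)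
  have pt: "\<And>T. T \<in> P \<Longrightarrow> phylo_tree T" using assms(1) by (simp add: profile_def)
  have twf: "\<And>T. T \<in> P \<Longrightarrow> wf_graph (verts T) (edges T)" using pt by (simp add: phylo_tree_def is_tree_def)
  have legal: "\<forall>T\<in>P. \<exists>u\<in>verts T. F \<inter> edges T \<subseteq> Inc P u"
    using assms(3) by (simp add: nice_cut_def legal_cut_def)
  have nice: "\<And>C. component ?V (?E - F) C \<Longrightarrow> \<exists>e\<in>?E - F. e \<subseteq> C"
    using assms(3) by (simp add: nice_cut_def)
  have ne: "C \<inter> labels P \<noteq> {}" if c: "component ?V (?E-F) C" for C
  proof -
    obtain e where e: "e \<in> ?E - F" "e \<subseteq> C" using nice[OF c] by blast
    then obtain T where T: "T \<in> P" "e \<in> edges T" using Vd by auto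
    obtain u where u: "F \<inter> edges T \<subseteq> Inc P u" using legal T by blast
    have closed: "y \<in> C" if fF: "f \<in> edges T - F" "f = {x,y}" "x \<in> C" for f x y
    proof -
      have fT: "f \<in> edges T" using fF by simp
      obtain p q where pq: "p \<noteq> q" "f = {p,q}" "p \<in> verts T" "q \<in> verts T"
        by (rule wf_edgeE[OF twf[OF T(1)] fT])
      have yV: "y \<in> ?V" using pq fF T Vd by (auto simp: doubleton_eq_iff)
      have xy: "x \<noteq> y" using pq fF by (auto simp: doubleton_eq_iff)
      have "{x,y} \<in> ?E - F" using fF T Vd by auto
      then have "(x,y) \<in> adj (?E - F)" using xy by (simp add: adj_def)
      then have "(x,y) \<in> (adj (?E - F))\<^sup>*" by simp
      then show ?thesis using comp_char[OF c fF(3)] yV by blast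
    qed
    have leg: "u \<in> f" if "f \<in> F \<inter> edges T" for f using u that by (auto simp: Inc_def)
    have e1: "e \<in> edges T - F" using e T by auto
    have "C \<inter> leaves T \<noteq> {}"
      by (rule leaf_in_comp[OF pt[OF T(1)] closed leg e1 e(2)])
    moreover have "leaves T \<subseteq> labels P" using T by (auto simp: labels_def)
    ultimately show ?thesis by blast
  qed
  have disj: "C1 \<inter> labels P \<inter> (C2 \<inter> labels P) = {}"
    using comp_eq[OF assms(5,6)] assms(7) by blast
  have mc: "minimal_cut (?V, ?E) F" using assms(4) by (simp add: verts_def edges_def)
  have wfE: "\<forall>e\<in>?E. \<exists>a b. e = {a,b}"
  proof
    fix e assume "e \<in> ?E"
    then obtain T where T: "T \<in> P" "e \<in> edges T" using Vd by auto
    obtain p q where "p \<noteq> q" "e = {p,q}" "p \<in> verts T" "q \<in> verts T"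
      by (rule wf_edgeE[OF twf[OF T(1)] T(2)])
    then show "\<exists>a b. e = {a,b}" by blast
  qed
  have un: "C1 \<inter> labels P \<union> C2 \<inter> labels P = labels P"
  proof
    show "C1 \<inter> labels P \<union> C2 \<inter> labels P \<subseteq> labels P" by blast
    show "labels P \<subseteq> C1 \<inter> labels P \<union> C2 \<inter> labels P"
    proof
      fix w assume w: "w \<in> labels P"
      then have wV: "w \<in> ?V" using Vd by (auto simp: labels_def leaves_def)
      let ?C = "{x\<in>?V. (w,x) \<in> (adj (?E-F))\<^sup>*}"
      have cc: "component ?V (?E-F) ?C" by (rule comp_of[OF wV])
      have "w \<in> ?C" using wV by simp
      moreover have "?C = C1 \<or> ?C = C2"
        using two_comps[OF assms(2) mc wfE assms(5,6) cc assms(7)] by blast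
      ultimately show "w \<in> C1 \<inter> labels P \<union> C2 \<inter> labels P" using w by blast
    qed
  qed
  show ?thesis unfolding is_split_def using ne[OF assms(5)] ne[OF assms(6)] disj un by blast
qed

end
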